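(* Let $R$ be a commutative noetherian ring and let $N$ be a spectral object of the category $R\text{-}Mod$ of $R$-modules. Let $M$ be a finitely generated $R$-module such that $\langle N\rangle\in Supp(M)$. Then $Hom_{R\text{-}Mod}(M,N)\neq 0$.
   Context: For an abelian category $\mathcal A$ and objects $X,Y$, write $X\prec Y$ if $X$ is a subquotient of a direct sum of finitely many copies of $Y$, and $X\approx Y$ if $X\prec Y\prec X$. $\langle X\rangle$ denotes the full subcategory of objects $Y$ with $X\not\prec Y$. A nonzero object $P$ is spectral if $Q\approx P$ for every nonzero subobject $Q\subseteq P$. For an object $M$, $Supp(M)=\{\langle P\rangle\mid P$ spectral, $P\prec M\}$. *)

theory Defs
  imports "HOL-Algebra.Algebra"
begin

definition mod_hom ::
  "('a, 'c) ring_scheme \<Rightarrow> ('a, 'b, 'd) module_scheme \<Rightarrow> ('a, 'e, 'f) module_scheme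
     \<Rightarrow> ('b \<Rightarrow> 'e) set" where
  "mod_hom R M N = {h. h \<in> carrier M \<rightarrow> carrier N \<and>
     (\<forall>x\<in>carrier M. \<forall>y\<in>carrier M. h (x \<oplus>\<^bsub>M\<^esub> y) = h x \<oplus>\<^bsub>N\<^esub> h y) \<and>
     (\<forall>a\<in>carrier R. \<forall>x\<in>carrier M. h (a \<odot>\<^bsub>M\<^esub> x) = a \<odot>\<^bsub>N\<^esub> h x)}"

definition fin_gen :: "('a, 'c) ring_scheme \<Rightarrow> ('a, 'b, 'd) module_scheme \<Rightarrow> bool" where
  "fin_gen R M \<longleftrightarrow> (\<exists>S. finite S \<and> S \<subseteq> carrier M \<and>
     (\<forall>m\<in>carrier M. \<exists>c. c \<in> S \<rightarrow> carrier R \<and>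
        m = finsum M (\<lambda>s. c s \<odot>\<^bsub>M\<^esub> s) S))"

text \<open>Direct sum of n copies of M, realised as functions nat \<Rightarrow> 'b supported on {..<n}.
  The multiplicative fields of the record are irrelevant for a module.\<close>
definition pow_mod :: "('a, 'b, 'd) module_scheme \<Rightarrow> nat \<Rightarrow> ('a, nat \<Rightarrow> 'b) module" where
  "pow_mod M n = module.make
     {f. (\<forall>i<n. f i \<in> carrier M) \<and> (\<forall>i\<ge>n. f i = \<zero>\<^bsub>M\<^esub>)}
     (\<lambda>f g. undefined) undefined
     (\<lambda>i. \<zero>\<^bsub>M\<^esub>)
     (\<lambda>f g i. f i \<oplus>\<^bsub>M\<^esub> g i)
     (\<lambda>a f i. if i < n then a \<odot>\<^bsub>M\<^esub> f i else \<zero>\<^bsub>M\<^esub>)"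

definition sub_mod :: "('a, 'b, 'd) module_scheme \<Rightarrow> 'b set \<Rightarrow> ('a, 'b, 'd) module_scheme" where
  "sub_mod M A = M\<lparr>carrier := A\<rparr>"

text \<open>X \<prec> Y: X is (isomorphic to) a subquotient of Y^n for some n, i.e. a quotient of a
  submodule A of Y^n, i.e. the image of a surjective R-linear map from A onto X.\<close>
definition subq :: "('a, 'c) ring_scheme \<Rightarrow> ('a, 'b, 'd) module_scheme
     \<Rightarrow> ('a, 'e, 'f) module_scheme \<Rightarrow> bool" where
  "subq R U V \<longleftrightarrow> (\<exists>n A h. submodule A R (pow_mod V n) \<and>
      h \<in> mod_hom R (sub_mod (pow_mod V n) A) U \<and> h ` A = carrier U)"

definition approx :: "('a, 'c) ring_scheme \<Rightarrow> ('a, 'b, 'd) module_scheme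
     \<Rightarrow> ('a, 'e, 'f) module_scheme \<Rightarrow> bool" where
  "approx R U V \<longleftrightarrow> subq R U V \<and> subq R V U"

definition spectral :: "('a, 'c) ring_scheme \<Rightarrow> ('a, 'b, 'd) module_scheme \<Rightarrow> bool" where
  "spectral R P \<longleftrightarrow> carrier P \<noteq> {\<zero>\<^bsub>P\<^esub>} \<and>
     (\<forall>Q. submodule Q R P \<and> Q \<noteq> {\<zero>\<^bsub>P\<^esub>} \<longrightarrow> approx R (sub_mod P Q) P)"

end

theory Submission
  imports Defs
begin


definition spn :: "('a, 'c) ring_scheme \<Rightarrow> ('a, 'b, 'd) module_scheme \<Rightarrow> 'b set \<Rightarrow> 'b set" where
  "spn R M S = {finsum M (\<lambda>s. c s \<odot>\<^bsub>M\<^esub> s) S | c. c \<in> S \<rightarrow> carrier R}"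

lemma (in module) spn_empty: "spn R M {} = {\<zero>\<^bsub>M\<^esub>}"
  unfolding spn_def by auto

lemma (in module) spn_insert:
  assumes "finite S" "S \<subseteq> carrier M" "s \<in> carrier M" "s \<notin> S"
  shows "spn R M (insert s S) = {r \<odot>\<^bsub>M\<^esub> s \<oplus>\<^bsub>M\<^esub> m | r m. r \<in> carrier R \<and> m \<in> spn R M S}"
proof
  show "spn R M (insert s S) \<subseteq> {r \<odot>\<^bsub>M\<^esub> s \<oplus>\<^bsub>M\<^esub> m | r m. r \<in> carrier R \<and> m \<in> spn R M S}"
  proof
    fix y assume "y \<in> spn R M (insert s S)"
    then obtain c where c: "c \<in> insert s S \<rightarrow> carrier R" "y = finsum M (\<lambda>s. c s \<odot>\<^bsub>M\<^esub> s) (insert s S)"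
      unfolding spn_def by auto
    have "y = c s \<odot>\<^bsub>M\<^esub> s \<oplus>\<^bsub>M\<^esub> finsum M (\<lambda>s. c s \<odot>\<^bsub>M\<^esub> s) S"
      using c assms by (subst c(2), subst finsum_insert) (auto simp: Pi_def)
    moreover have "finsum M (\<lambda>s. c s \<odot>\<^bsub>M\<^esub> s) S \<in> spn R M S"
      unfolding spn_def using c by auto
    ultimately show "y \<in> {r \<odot>\<^bsub>M\<^esub> s \<oplus>\<^bsub>M\<^esub> m | r m. r \<in> carrier R \<and> m \<in> spn R M S}"
      using c by auto
  qed
next
  show "{r \<odot>\<^bsub>M\<^esub> s \<oplus>\<^bsub>M\<^esub> m | r m. r \<in> carrier R \<and> m \<in> spn R M S} \<subseteq> spn R M (insert s S)"
  proof
    fix y assume "y \<in> {r \<odot>\<^bsub>M\<^esub> s \<oplus>\<^bsub>M\<^esub> m | r m. r \<in> carrier R \<and> m \<in> spn R M S}"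
    then obtain r c where rc: "r \<in> carrier R" "c \<in> S \<rightarrow> carrier R"
      "y = r \<odot>\<^bsub>M\<^esub> s \<oplus>\<^bsub>M\<^esub> finsum M (\<lambda>s. c s \<odot>\<^bsub>M\<^esub> s) S"
      unfolding spn_def by auto
    let ?c = "c(s := r)"
    have "finsum M (\<lambda>t. ?c t \<odot>\<^bsub>M\<^esub> t) (insert s S) = ?c s \<odot>\<^bsub>M\<^esub> s \<oplus>\<^bsub>M\<^esub> finsum M (\<lambda>t. ?c t \<odot>\<^bsub>M\<^esub> t) S"
      using rc assms by (subst finsum_insert) (auto simp: Pi_def)
    also have "finsum M (\<lambda>t. ?c t \<odot>\<^bsub>M\<^esub> t) S = finsum M (\<lambda>s. c s \<odot>\<^bsub>M\<^esub> s) S"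
      using rc assms by (intro finsum_cong) (auto simp: Pi_def simp_implies_def)
    finally have "y = finsum M (\<lambda>t. ?c t \<odot>\<^bsub>M\<^esub> t) (insert s S)" using rc by simp
    moreover have "?c \<in> insert s S \<rightarrow> carrier R" using rc by auto
    ultimately show "y \<in> spn R M (insert s S)" unfolding spn_def by blast
  qed
qed

lemma (in module) spn_sub:
  assumes "finite S" "S \<subseteq> carrier M"
  shows "spn R M S \<subseteq> carrier M"
  unfolding spn_def using assms by (auto intro!: finsum_closed simp: Pi_def)

lemma (in module) spn_submodule:
  assumes "finite S" "S \<subseteq> carrier M"
  shows "submodule (spn R M S) R M"
  using assms
proof (induction S rule: finite_induct)
  case empty
  show ?case unfolding spn_empty by (rule submoduleI) auto
next
  case (insert s S)
  interpret Sm: submodule "spn R M S" R M using insert by auto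
  have sub: "spn R M S \<subseteq> carrier M" using spn_sub insert by auto
  have s: "s \<in> carrier M" using insert by auto
  have Ssub: "S \<subseteq> carrier M" using insert by auto
  note eq = spn_insert[OF insert(1) Ssub s insert(2)]
  show ?case unfolding eq
  proof (rule submoduleI)
    show "{r \<odot>\<^bsub>M\<^esub> s \<oplus>\<^bsub>M\<^esub> m | r m. r \<in> carrier R \<and> m \<in> spn R M S} \<subseteq> carrier M"
      using sub s by auto
    show "\<zero>\<^bsub>M\<^esub> \<in> {r \<odot>\<^bsub>M\<^esub> s \<oplus>\<^bsub>M\<^esub> m | r m. r \<in> carrier R \<and> m \<in> spn R M S}"
    proof -
      have "\<zero>\<^bsub>M\<^esub> = \<zero> \<odot>\<^bsub>M\<^esub> s \<oplus>\<^bsub>M\<^esub> \<zero>\<^bsub>M\<^esub>" using s by simp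
      moreover have "\<zero>\<^bsub>M\<^esub> \<in> spn R M S" using Sm.one_closed by simp
      ultimately show ?thesis by blast
    qed
  next
    fix a assume "a \<in> {r \<odot>\<^bsub>M\<^esub> s \<oplus>\<^bsub>M\<^esub> m | r m. r \<in> carrier R \<and> m \<in> spn R M S}"
    then obtain r m where rm: "r \<in> carrier R" "m \<in> spn R M S" "a = r \<odot>\<^bsub>M\<^esub> s \<oplus>\<^bsub>M\<^esub> m" by auto
    have m: "m \<in> carrier M" using rm sub by auto
    have "\<ominus>\<^bsub>M\<^esub> a = (\<ominus> r) \<odot>\<^bsub>M\<^esub> s \<oplus>\<^bsub>M\<^esub> (\<ominus>\<^bsub>M\<^esub> m)"
      using rm m s by (simp add: smult_l_minus M.minus_add)
    moreover have "\<ominus>\<^bsub>M\<^esub> m \<in> spn R M S"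
      using rm submoduleE(3)[OF Sm.submodule_axioms] by auto
    ultimately show "\<ominus>\<^bsub>M\<^esub> a \<in> {r \<odot>\<^bsub>M\<^esub> s \<oplus>\<^bsub>M\<^esub> m | r m. r \<in> carrier R \<and> m \<in> spn R M S}"
      using rm by blast
  next
    fix a b assume "a \<in> {r \<odot>\<^bsub>M\<^esub> s \<oplus>\<^bsub>M\<^esub> m | r m. r \<in> carrier R \<and> m \<in> spn R M S}"
      "b \<in> {r \<odot>\<^bsub>M\<^esub> s \<oplus>\<^bsub>M\<^esub> m | r m. r \<in> carrier R \<and> m \<in> spn R M S}"
    then obtain r m r' m' where rm: "r \<in> carrier R" "m \<in> spn R M S" "a = r \<odot>\<^bsub>M\<^esub> s \<oplus>\<^bsub>M\<^esub> m"
      "r' \<in> carrier R" "m' \<in> spn R M S" "b = r' \<odot>\<^bsub>M\<^esub> s \<oplus>\<^bsub>M\<^esub> m'" by blast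
    have m: "m \<in> carrier M" "m' \<in> carrier M" using rm sub by auto
    have "a \<oplus>\<^bsub>M\<^esub> b = (r \<oplus> r') \<odot>\<^bsub>M\<^esub> s \<oplus>\<^bsub>M\<^esub> (m \<oplus>\<^bsub>M\<^esub> m')"
      using rm m s by (simp add: smult_l_distr M.a_ac)
    moreover have "m \<oplus>\<^bsub>M\<^esub> m' \<in> spn R M S" using rm Sm.m_closed by auto
    ultimately show "a \<oplus>\<^bsub>M\<^esub> b \<in> {r \<odot>\<^bsub>M\<^esub> s \<oplus>\<^bsub>M\<^esub> m | r m. r \<in> carrier R \<and> m \<in> spn R M S}"
      using rm by blast
  next
    fix a y assume a: "a \<in> carrier R" and "y \<in> {r \<odot>\<^bsub>M\<^esub> s \<oplus>\<^bsub>M\<^esub> m | r m. r \<in> carrier R \<and> m \<in> spn R M S}"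
    then obtain r m where rm: "r \<in> carrier R" "m \<in> spn R M S" "y = r \<odot>\<^bsub>M\<^esub> s \<oplus>\<^bsub>M\<^esub> m" by auto
    have m: "m \<in> carrier M" using rm sub by auto
    have "a \<odot>\<^bsub>M\<^esub> y = (a \<otimes> r) \<odot>\<^bsub>M\<^esub> s \<oplus>\<^bsub>M\<^esub> (a \<odot>\<^bsub>M\<^esub> m)"
      using rm m s a by (simp add: smult_r_distr smult_assoc1)
    moreover have "a \<odot>\<^bsub>M\<^esub> m \<in> spn R M S" using rm a by auto
    ultimately show "a \<odot>\<^bsub>M\<^esub> y \<in> {r \<odot>\<^bsub>M\<^esub> s \<oplus>\<^bsub>M\<^esub> m | r m. r \<in> carrier R \<and> m \<in> spn R M S}"
      using rm a by blast
  qed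
qed




lemma (in abelian_group) swap_eq:
  assumes "a \<in> carrier G" "b \<in> carrier G" "c \<in> carrier G" "d \<in> carrier G"
    and "a \<oplus> b = c \<oplus> d"
  shows "a \<ominus> c = d \<ominus> b"
proof -
  have "a \<ominus> c = (a \<oplus> b) \<ominus> (c \<oplus> b)" using assms(1-4) by (simp add: a_minus_def minus_add a_ac r_neg1 r_neg2)
  also have "\<dots> = (c \<oplus> d) \<ominus> (c \<oplus> b)" using assms by simp
  also have "\<dots> = d \<ominus> b" using assms(1-4) apply (simp add: a_minus_def minus_add a_ac r_neg1 r_neg2)
    by (smt (verit) a_assoc a_closed a_comm a_inv_closed add.inv_solve_right)
  finally show ?thesis .
qed

lemma (in abelian_group) minus_zero_eq:
  "a \<in> carrier G \<Longrightarrow> b \<in> carrier G \<Longrightarrow> a \<ominus> b = \<zero> \<Longrightarrow> a = b"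
  by (simp add: add.inv_solve_right' minus_eq)

lemma (in module) smult_minus_distr:
  assumes "a \<in> carrier R" "b \<in> carrier R" "x \<in> carrier M"
  shows "(a \<ominus> b) \<odot>\<^bsub>M\<^esub> x = a \<odot>\<^bsub>M\<^esub> x \<ominus>\<^bsub>M\<^esub> b \<odot>\<^bsub>M\<^esub> x"
  using assms by (simp add: R.minus_eq M.minus_eq smult_l_distr smult_l_minus)




definition lin_on where
  "lin_on R M N A h \<longleftrightarrow> (\<forall>m\<in>A. \<forall>m'\<in>A. h (m \<oplus>\<^bsub>M\<^esub> m') = h m \<oplus>\<^bsub>N\<^esub> h m') \<and>
     (\<forall>a\<in>carrier R. \<forall>m\<in>A. h (a \<odot>\<^bsub>M\<^esub> m) = a \<odot>\<^bsub>N\<^esub> h m)"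

locale setup2 = R: cring R + M: module R M + N: module R N
  for R :: "('a, 'c) ring_scheme" and M :: "('a, 'b, 'd) module_scheme"
    and N :: "('a, 'e, 'f) module_scheme" +
  fixes x
  assumes x_in: "x \<in> carrier N" and x_nz: "x \<noteq> \<zero>\<^bsub>N\<^esub>"
    and prime: "\<And>a b. a \<in> carrier R \<Longrightarrow> b \<in> carrier R \<Longrightarrow>
       (a \<otimes>\<^bsub>R\<^esub> b) \<odot>\<^bsub>N\<^esub> x = \<zero>\<^bsub>N\<^esub> \<Longrightarrow> a \<odot>\<^bsub>N\<^esub> x = \<zero>\<^bsub>N\<^esub> \<or> b \<odot>\<^bsub>N\<^esub> x = \<zero>\<^bsub>N\<^esub>"
begin

definition Cx where "Cx = {r \<odot>\<^bsub>N\<^esub> x | r. r \<in> carrier R}"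

lemma Cx_sub: "y \<in> Cx \<Longrightarrow> y \<in> carrier N"
  unfolding Cx_def using x_in by auto

lemma Cx_add: "y \<in> Cx \<Longrightarrow> z \<in> Cx \<Longrightarrow> y \<oplus>\<^bsub>N\<^esub> z \<in> Cx"
proof -
  assume "y \<in> Cx" "z \<in> Cx"
  then obtain r r' where "r \<in> carrier R" "r' \<in> carrier R" "y = r \<odot>\<^bsub>N\<^esub> x" "z = r' \<odot>\<^bsub>N\<^esub> x"
    unfolding Cx_def by auto
  then have "y \<oplus>\<^bsub>N\<^esub> z = (r \<oplus>\<^bsub>R\<^esub> r') \<odot>\<^bsub>N\<^esub> x \<and> r \<oplus>\<^bsub>R\<^esub> r' \<in> carrier R"
    using x_in by (simp add: N.smult_l_distr)
  then show ?thesis unfolding Cx_def by blast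
qed

lemma Cx_smult: "a \<in> carrier R \<Longrightarrow> y \<in> Cx \<Longrightarrow> a \<odot>\<^bsub>N\<^esub> y \<in> Cx"
proof -
  assume a: "a \<in> carrier R" "y \<in> Cx"
  then obtain r where "r \<in> carrier R" "y = r \<odot>\<^bsub>N\<^esub> x"
    unfolding Cx_def by auto
  then have "a \<odot>\<^bsub>N\<^esub> y = (a \<otimes>\<^bsub>R\<^esub> r) \<odot>\<^bsub>N\<^esub> x \<and> a \<otimes>\<^bsub>R\<^esub> r \<in> carrier R"
    using x_in a by (simp add: N.smult_assoc1)
  then show ?thesis unfolding Cx_def by blast
qed

lemma Cx_x: "r \<in> carrier R \<Longrightarrow> r \<odot>\<^bsub>N\<^esub> x \<in> Cx"
  unfolding Cx_def by auto

lemma tf: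
  assumes "y \<in> Cx" "r \<in> carrier R" "r \<odot>\<^bsub>N\<^esub> x \<noteq> \<zero>\<^bsub>N\<^esub>" "r \<odot>\<^bsub>N\<^esub> y = \<zero>\<^bsub>N\<^esub>"
  shows "y = \<zero>\<^bsub>N\<^esub>"
proof -
  obtain c where c: "c \<in> carrier R" "y = c \<odot>\<^bsub>N\<^esub> x" using assms(1) unfolding Cx_def by auto
  have "(r \<otimes>\<^bsub>R\<^esub> c) \<odot>\<^bsub>N\<^esub> x = \<zero>\<^bsub>N\<^esub>"
    using assms c x_in by (simp add: N.smult_assoc1)
  then show ?thesis using prime[of r c] assms c by auto
qed

end




context setup2 begin

lemma decomp_wd:
  assumes S: "finite S" "S \<subseteq> carrier M" and s: "s \<in> carrier M"
    and r: "r \<in> carrier R" "r' \<in> carrier R" and m: "m \<in> spn R M S" "m' \<in> spn R M S"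
    and eq: "r \<odot>\<^bsub>M\<^esub> s \<oplus>\<^bsub>M\<^esub> m = r' \<odot>\<^bsub>M\<^esub> s \<oplus>\<^bsub>M\<^esub> m'"
  shows "(r \<ominus>\<^bsub>R\<^esub> r') \<odot>\<^bsub>M\<^esub> s = m' \<ominus>\<^bsub>M\<^esub> m"
    and "m' \<ominus>\<^bsub>M\<^esub> m \<in> spn R M S"
proof -
  interpret Sm: submodule "spn R M S" R M using M.spn_submodule[OF S] .
  have mc: "m \<in> carrier M" "m' \<in> carrier M" using m M.spn_sub[OF S] by auto
  show "(r \<ominus>\<^bsub>R\<^esub> r') \<odot>\<^bsub>M\<^esub> s = m' \<ominus>\<^bsub>M\<^esub> m"
    using M.swap_eq[OF _ _ _ _ eq] r s mc by (simp add: M.smult_minus_distr)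
  show "m' \<ominus>\<^bsub>M\<^esub> m \<in> spn R M S"
    using m M.submoduleE(3,5)[OF Sm.submodule_axioms] by (simp add: a_minus_def)
qed

lemma case1:
  assumes S: "finite S" "S \<subseteq> carrier M" and s: "s \<in> carrier M"
    and H: "\<forall>t\<in>carrier R. t \<odot>\<^bsub>M\<^esub> s \<in> spn R M S \<longrightarrow> t \<odot>\<^bsub>N\<^esub> x = \<zero>\<^bsub>N\<^esub>"
    and T: "T = {r \<odot>\<^bsub>M\<^esub> s \<oplus>\<^bsub>M\<^esub> m | r m. r \<in> carrier R \<and> m \<in> spn R M S}"
  shows "\<exists>h. (\<forall>m\<in>T. h m \<in> Cx) \<and> lin_on R M N T h \<and> (\<exists>m\<in>T. h m \<noteq> \<zero>\<^bsub>N\<^esub>)"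
proof -
  interpret Sm: submodule "spn R M S" R M using M.spn_submodule[OF S] .
  have sub: "spn R M S \<subseteq> carrier M" using M.spn_sub[OF S] .
  define h where "h y = (SOME r. r \<in> carrier R \<and> (\<exists>m\<in>spn R M S. y = r \<odot>\<^bsub>M\<^esub> s \<oplus>\<^bsub>M\<^esub> m)) \<odot>\<^bsub>N\<^esub> x" for y
  have wd: "r \<odot>\<^bsub>N\<^esub> x = r' \<odot>\<^bsub>N\<^esub> x"
    if "r \<in> carrier R" "r' \<in> carrier R" "m \<in> spn R M S" "m' \<in> spn R M S"
       "r \<odot>\<^bsub>M\<^esub> s \<oplus>\<^bsub>M\<^esub> m = r' \<odot>\<^bsub>M\<^esub> s \<oplus>\<^bsub>M\<^esub> m'" for r r' m m'
  proof -
    have "(r \<ominus>\<^bsub>R\<^esub> r') \<odot>\<^bsub>M\<^esub> s \<in> spn R M S"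
      using decomp_wd[OF S s that] by simp
    then have "(r \<ominus>\<^bsub>R\<^esub> r') \<odot>\<^bsub>N\<^esub> x = \<zero>\<^bsub>N\<^esub>" using H that by auto
    then have "r \<odot>\<^bsub>N\<^esub> x \<ominus>\<^bsub>N\<^esub> r' \<odot>\<^bsub>N\<^esub> x = \<zero>\<^bsub>N\<^esub>"
      using that x_in by (simp add: N.smult_minus_distr)
    then show ?thesis using that x_in N.minus_zero_eq by simp
  qed
  have heq: "h (r \<odot>\<^bsub>M\<^esub> s \<oplus>\<^bsub>M\<^esub> m) = r \<odot>\<^bsub>N\<^esub> x" if "r \<in> carrier R" "m \<in> spn R M S" for r m
  proof -
    let ?P = "\<lambda>r'. r' \<in> carrier R \<and> (\<exists>m'\<in>spn R M S. r \<odot>\<^bsub>M\<^esub> s \<oplus>\<^bsub>M\<^esub> m = r' \<odot>\<^bsub>M\<^esub> s \<oplus>\<^bsub>M\<^esub> m')"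
    have "?P r" using that by blast
    then have "?P (SOME r. ?P r)" by (rule someI)
    then obtain m' where "(SOME r. ?P r) \<in> carrier R" "m' \<in> spn R M S"
      "r \<odot>\<^bsub>M\<^esub> s \<oplus>\<^bsub>M\<^esub> m = (SOME r. ?P r) \<odot>\<^bsub>M\<^esub> s \<oplus>\<^bsub>M\<^esub> m'" by blast
    then have "r \<odot>\<^bsub>N\<^esub> x = (SOME r. ?P r) \<odot>\<^bsub>N\<^esub> x" using wd that by blast
    then show ?thesis unfolding h_def by simp
  qed
  show ?thesis
  proof (intro exI[of _ h] conjI)
    show "\<forall>m\<in>T. h m \<in> Cx" using heq Cx_x unfolding T by auto
    show "lin_on R M N T h" unfolding lin_on_def
    proof (intro conjI ballI)
      fix y y' assume "y \<in> T" "y' \<in> T"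
      then obtain r m r' m' where rm: "r \<in> carrier R" "m \<in> spn R M S" "y = r \<odot>\<^bsub>M\<^esub> s \<oplus>\<^bsub>M\<^esub> m"
        "r' \<in> carrier R" "m' \<in> spn R M S" "y' = r' \<odot>\<^bsub>M\<^esub> s \<oplus>\<^bsub>M\<^esub> m'" unfolding T by blast
      have mc: "m \<in> carrier M" "m' \<in> carrier M" using rm sub by auto
      have "y \<oplus>\<^bsub>M\<^esub> y' = (r \<oplus>\<^bsub>R\<^esub> r') \<odot>\<^bsub>M\<^esub> s \<oplus>\<^bsub>M\<^esub> (m \<oplus>\<^bsub>M\<^esub> m')"
        using rm mc s by (simp add: M.smult_l_distr M.a_ac)
      moreover have "m \<oplus>\<^bsub>M\<^esub> m' \<in> spn R M S" using rm Sm.m_closed by auto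
      ultimately show "h (y \<oplus>\<^bsub>M\<^esub> y') = h y \<oplus>\<^bsub>N\<^esub> h y'"
        using rm heq x_in by (simp add: N.smult_l_distr)
    next
      fix a y assume a: "a \<in> carrier R" and "y \<in> T"
      then obtain r m where rm: "r \<in> carrier R" "m \<in> spn R M S" "y = r \<odot>\<^bsub>M\<^esub> s \<oplus>\<^bsub>M\<^esub> m"
        unfolding T by blast
      have mc: "m \<in> carrier M" using rm sub by auto
      have "a \<odot>\<^bsub>M\<^esub> y = (a \<otimes>\<^bsub>R\<^esub> r) \<odot>\<^bsub>M\<^esub> s \<oplus>\<^bsub>M\<^esub> (a \<odot>\<^bsub>M\<^esub> m)"
        using rm mc s a by (simp add: M.smult_r_distr M.smult_assoc1)
      moreover have "a \<odot>\<^bsub>M\<^esub> m \<in> spn R M S" using rm a by auto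
      ultimately show "h (a \<odot>\<^bsub>M\<^esub> y) = a \<odot>\<^bsub>N\<^esub> h y"
        using rm heq x_in a by (simp add: N.smult_assoc1)
    qed
    have "\<one>\<^bsub>R\<^esub> \<odot>\<^bsub>M\<^esub> s \<oplus>\<^bsub>M\<^esub> \<zero>\<^bsub>M\<^esub> \<in> T" unfolding T using Sm.one_closed by auto
    moreover have "h (\<one>\<^bsub>R\<^esub> \<odot>\<^bsub>M\<^esub> s \<oplus>\<^bsub>M\<^esub> \<zero>\<^bsub>M\<^esub>) = x" using heq[of "\<one>\<^bsub>R\<^esub>" "\<zero>\<^bsub>M\<^esub>"] Sm.one_closed x_in by simp
    ultimately show "\<exists>m\<in>T. h m \<noteq> \<zero>\<^bsub>N\<^esub>" using x_nz by metis
  qed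
qed

end



context setup2 begin

lemma case2:
  assumes S: "finite S" "S \<subseteq> carrier M" and s: "s \<in> carrier M"
    and t: "t \<in> carrier R" "t \<odot>\<^bsub>M\<^esub> s \<in> spn R M S" "t \<odot>\<^bsub>N\<^esub> x \<noteq> \<zero>\<^bsub>N\<^esub>"
    and h': "\<forall>m\<in>spn R M S. h' m \<in> Cx" "lin_on R M N (spn R M S) h'"
    and m0: "m0 \<in> spn R M S" "h' m0 \<noteq> \<zero>\<^bsub>N\<^esub>"
    and T: "T = {r \<odot>\<^bsub>M\<^esub> s \<oplus>\<^bsub>M\<^esub> m | r m. r \<in> carrier R \<and> m \<in> spn R M S}"
  shows "\<exists>h. (\<forall>m\<in>T. h m \<in> Cx) \<and> lin_on R M N T h \<and> (\<exists>m\<in>T. h m \<noteq> \<zero>\<^bsub>N\<^esub>)"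
proof -
  interpret Sm: submodule "spn R M S" R M using M.spn_submodule[OF S] .
  have sub: "spn R M S \<subseteq> carrier M" using M.spn_sub[OF S] .
  have hadd: "h' (m \<oplus>\<^bsub>M\<^esub> m') = h' m \<oplus>\<^bsub>N\<^esub> h' m'" if "m \<in> spn R M S" "m' \<in> spn R M S" for m m'
    using h'(2) that unfolding lin_on_def by blast
  have hsm: "h' (a \<odot>\<^bsub>M\<^esub> m) = a \<odot>\<^bsub>N\<^esub> h' m" if "a \<in> carrier R" "m \<in> spn R M S" for a m
    using h'(2) that unfolding lin_on_def by blast
  have hc: "h' m \<in> carrier N" if "m \<in> spn R M S" for m using h'(1) that Cx_sub by blast
  define v where "v = h' (t \<odot>\<^bsub>M\<^esub> s)"
  have vC: "v \<in> Cx" unfolding v_def using h'(1) t by blast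
  have vc: "v \<in> carrier N" using vC Cx_sub by blast
  define h where "h y = (SOME z. \<exists>r m. r \<in> carrier R \<and> m \<in> spn R M S \<and> y = r \<odot>\<^bsub>M\<^esub> s \<oplus>\<^bsub>M\<^esub> m
      \<and> z = t \<odot>\<^bsub>N\<^esub> h' m \<oplus>\<^bsub>N\<^esub> r \<odot>\<^bsub>N\<^esub> v)" for y
  have wd: "t \<odot>\<^bsub>N\<^esub> h' m \<oplus>\<^bsub>N\<^esub> r \<odot>\<^bsub>N\<^esub> v = t \<odot>\<^bsub>N\<^esub> h' m' \<oplus>\<^bsub>N\<^esub> r' \<odot>\<^bsub>N\<^esub> v"
    if rr: "r \<in> carrier R" "r' \<in> carrier R" and mm: "m \<in> spn R M S" "m' \<in> spn R M S"
       and eq: "r \<odot>\<^bsub>M\<^esub> s \<oplus>\<^bsub>M\<^esub> m = r' \<odot>\<^bsub>M\<^esub> s \<oplus>\<^bsub>M\<^esub> m'" for r r' m m'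
  proof -
    define d where "d = r \<ominus>\<^bsub>R\<^esub> r'"
    have d: "d \<in> carrier R" unfolding d_def using rr by simp
    have ds: "d \<odot>\<^bsub>M\<^esub> s = m' \<ominus>\<^bsub>M\<^esub> m" "d \<odot>\<^bsub>M\<^esub> s \<in> spn R M S"
      using decomp_wd[OF S s rr mm eq] unfolding d_def by auto
    have mc: "m \<in> carrier M" "m' \<in> carrier M" using mm sub by auto
    have m'eq: "m' = d \<odot>\<^bsub>M\<^esub> s \<oplus>\<^bsub>M\<^esub> m"
      using ds(1) mc by (simp add: a_minus_def M.a_assoc M.l_neg)
    have r_eq: "r = d \<oplus>\<^bsub>R\<^esub> r'"
      using rr unfolding d_def by (simp add: a_minus_def R.a_assoc R.l_neg)
    have "t \<odot>\<^bsub>N\<^esub> h' (d \<odot>\<^bsub>M\<^esub> s) = h' (t \<odot>\<^bsub>M\<^esub> (d \<odot>\<^bsub>M\<^esub> s))"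
      using hsm t ds d by simp
    also have "t \<odot>\<^bsub>M\<^esub> (d \<odot>\<^bsub>M\<^esub> s) = d \<odot>\<^bsub>M\<^esub> (t \<odot>\<^bsub>M\<^esub> s)"
      using t d s by (simp add: M.smult_assoc1[symmetric] R.m_comm)
    also have "h' \<dots> = d \<odot>\<^bsub>N\<^esub> v" unfolding v_def using hsm t d by simp
    finally have key: "t \<odot>\<^bsub>N\<^esub> h' (d \<odot>\<^bsub>M\<^esub> s) = d \<odot>\<^bsub>N\<^esub> v" .
    have "t \<odot>\<^bsub>N\<^esub> h' m' \<oplus>\<^bsub>N\<^esub> r' \<odot>\<^bsub>N\<^esub> v
        = (t \<odot>\<^bsub>N\<^esub> h' (d \<odot>\<^bsub>M\<^esub> s) \<oplus>\<^bsub>N\<^esub> t \<odot>\<^bsub>N\<^esub> h' m) \<oplus>\<^bsub>N\<^esub> r' \<odot>\<^bsub>N\<^esub> v"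
      unfolding m'eq using hadd ds mm t hc by (simp add: N.smult_r_distr)
    also have "\<dots> = t \<odot>\<^bsub>N\<^esub> h' m \<oplus>\<^bsub>N\<^esub> r \<odot>\<^bsub>N\<^esub> v"
      unfolding key r_eq using d rr t hc mm ds vc by (simp add: N.smult_l_distr N.a_ac)
    finally show ?thesis by simp
  qed
  have heq: "h (r \<odot>\<^bsub>M\<^esub> s \<oplus>\<^bsub>M\<^esub> m) = t \<odot>\<^bsub>N\<^esub> h' m \<oplus>\<^bsub>N\<^esub> r \<odot>\<^bsub>N\<^esub> v"
    if "r \<in> carrier R" "m \<in> spn R M S" for r m
  proof -
    let ?P = "\<lambda>z. \<exists>r' m'. r' \<in> carrier R \<and> m' \<in> spn R M S \<and> r \<odot>\<^bsub>M\<^esub> s \<oplus>\<^bsub>M\<^esub> m = r' \<odot>\<^bsub>M\<^esub> s \<oplus>\<^bsub>M\<^esub> m'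
      \<and> z = t \<odot>\<^bsub>N\<^esub> h' m' \<oplus>\<^bsub>N\<^esub> r' \<odot>\<^bsub>N\<^esub> v"
    have "?P (t \<odot>\<^bsub>N\<^esub> h' m \<oplus>\<^bsub>N\<^esub> r \<odot>\<^bsub>N\<^esub> v)" using that by blast
    then have "?P (SOME z. ?P z)" by (rule someI)
    then obtain r' m' where o: "r' \<in> carrier R" "m' \<in> spn R M S" "r \<odot>\<^bsub>M\<^esub> s \<oplus>\<^bsub>M\<^esub> m = r' \<odot>\<^bsub>M\<^esub> s \<oplus>\<^bsub>M\<^esub> m'"
      "(SOME z. ?P z) = t \<odot>\<^bsub>N\<^esub> h' m' \<oplus>\<^bsub>N\<^esub> r' \<odot>\<^bsub>N\<^esub> v" by blast
    have "(SOME z. ?P z) = t \<odot>\<^bsub>N\<^esub> h' m \<oplus>\<^bsub>N\<^esub> r \<odot>\<^bsub>N\<^esub> v"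
      unfolding o(4) using wd[OF that(1) o(1) that(2) o(2) o(3)] by simp
    then show ?thesis unfolding h_def by simp
  qed
  show ?thesis
  proof (intro exI[of _ h] conjI)
    show "\<forall>m\<in>T. h m \<in> Cx" unfolding T
      using heq Cx_add Cx_smult h'(1) vC t by auto
    show "lin_on R M N T h" unfolding lin_on_def
    proof (intro conjI ballI)
      fix y y' assume "y \<in> T" "y' \<in> T"
      then obtain r m r' m' where rm: "r \<in> carrier R" "m \<in> spn R M S" "y = r \<odot>\<^bsub>M\<^esub> s \<oplus>\<^bsub>M\<^esub> m"
        "r' \<in> carrier R" "m' \<in> spn R M S" "y' = r' \<odot>\<^bsub>M\<^esub> s \<oplus>\<^bsub>M\<^esub> m'" unfolding T by blast
      have mc: "m \<in> carrier M" "m' \<in> carrier M" using rm sub by auto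
      have "y \<oplus>\<^bsub>M\<^esub> y' = (r \<oplus>\<^bsub>R\<^esub> r') \<odot>\<^bsub>M\<^esub> s \<oplus>\<^bsub>M\<^esub> (m \<oplus>\<^bsub>M\<^esub> m')"
        using rm mc s by (simp add: M.smult_l_distr M.a_ac)
      moreover have "m \<oplus>\<^bsub>M\<^esub> m' \<in> spn R M S" using rm Sm.m_closed by auto
      ultimately show "h (y \<oplus>\<^bsub>M\<^esub> y') = h y \<oplus>\<^bsub>N\<^esub> h y'"
        using rm heq hadd hc vc t by (simp add: N.smult_l_distr N.smult_r_distr N.a_ac)
    next
      fix a y assume a: "a \<in> carrier R" and "y \<in> T"
      then obtain r m where rm: "r \<in> carrier R" "m \<in> spn R M S" "y = r \<odot>\<^bsub>M\<^esub> s \<oplus>\<^bsub>M\<^esub> m"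
        unfolding T by blast
      have mc: "m \<in> carrier M" using rm sub by auto
      have "a \<odot>\<^bsub>M\<^esub> y = (a \<otimes>\<^bsub>R\<^esub> r) \<odot>\<^bsub>M\<^esub> s \<oplus>\<^bsub>M\<^esub> (a \<odot>\<^bsub>M\<^esub> m)"
        using rm mc s a by (simp add: M.smult_r_distr M.smult_assoc1)
      moreover have "a \<odot>\<^bsub>M\<^esub> m \<in> spn R M S" using rm a by auto
      moreover have "t \<odot>\<^bsub>N\<^esub> (a \<odot>\<^bsub>N\<^esub> h' m) = a \<odot>\<^bsub>N\<^esub> (t \<odot>\<^bsub>N\<^esub> h' m)"
        using a t hc rm by (simp add: N.smult_assoc1[symmetric] R.m_comm)
      ultimately show "h (a \<odot>\<^bsub>M\<^esub> y) = a \<odot>\<^bsub>N\<^esub> h y"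
        using rm heq hsm hc vc a t by (simp add: N.smult_assoc1 N.smult_r_distr)
    qed
    have "\<zero>\<^bsub>R\<^esub> \<odot>\<^bsub>M\<^esub> s \<oplus>\<^bsub>M\<^esub> m0 \<in> T" unfolding T using m0 by blast
    moreover have "h (\<zero>\<^bsub>R\<^esub> \<odot>\<^bsub>M\<^esub> s \<oplus>\<^bsub>M\<^esub> m0) = t \<odot>\<^bsub>N\<^esub> h' m0"
      using heq[of "\<zero>\<^bsub>R\<^esub>" m0] m0 hc vc t by simp
    moreover have "t \<odot>\<^bsub>N\<^esub> h' m0 \<noteq> \<zero>\<^bsub>N\<^esub>" using tf[of "h' m0" t] h'(1) m0 t by blast
    ultimately show "\<exists>m\<in>T. h m \<noteq> \<zero>\<^bsub>N\<^esub>" by metis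
  qed
qed

end





context setup2 begin

lemma main_L:
  assumes "finite S" "S \<subseteq> carrier M"
    and "\<forall>a\<in>carrier R. (\<forall>m\<in>spn R M S. a \<odot>\<^bsub>M\<^esub> m = \<zero>\<^bsub>M\<^esub>) \<longrightarrow> a \<odot>\<^bsub>N\<^esub> x = \<zero>\<^bsub>N\<^esub>"
  shows "\<exists>h. (\<forall>m\<in>spn R M S. h m \<in> Cx) \<and> lin_on R M N (spn R M S) h \<and> (\<exists>m\<in>spn R M S. h m \<noteq> \<zero>\<^bsub>N\<^esub>)"
  using assms
proof (induction S rule: finite_induct)
  case empty
  have "\<one>\<^bsub>R\<^esub> \<odot>\<^bsub>N\<^esub> x = \<zero>\<^bsub>N\<^esub>" using empty(2) unfolding M.spn_empty by simp
  then show ?case using x_in x_nz by simp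
next
  case (insert s S)
  have Ssub: "S \<subseteq> carrier M" and s: "s \<in> carrier M" using insert by auto
  note T = M.spn_insert[OF insert(1) Ssub s insert(2)]
  interpret Sm: submodule "spn R M S" R M using M.spn_submodule[OF insert(1) Ssub] .
  have sub: "spn R M S \<subseteq> carrier M" using M.spn_sub[OF insert(1) Ssub] .
  show ?case
  proof (cases "\<forall>t\<in>carrier R. t \<odot>\<^bsub>M\<^esub> s \<in> spn R M S \<longrightarrow> t \<odot>\<^bsub>N\<^esub> x = \<zero>\<^bsub>N\<^esub>")
    case True
    show ?thesis by (rule case1[OF insert(1) Ssub s True T])
  next
    case False
    then obtain t where t: "t \<in> carrier R" "t \<odot>\<^bsub>M\<^esub> s \<in> spn R M S" "t \<odot>\<^bsub>N\<^esub> x \<noteq> \<zero>\<^bsub>N\<^esub>" by blast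
    have "\<forall>a\<in>carrier R. (\<forall>m\<in>spn R M S. a \<odot>\<^bsub>M\<^esub> m = \<zero>\<^bsub>M\<^esub>) \<longrightarrow> a \<odot>\<^bsub>N\<^esub> x = \<zero>\<^bsub>N\<^esub>"
    proof (intro ballI impI)
      fix a assume a: "a \<in> carrier R" and ka: "\<forall>m\<in>spn R M S. a \<odot>\<^bsub>M\<^esub> m = \<zero>\<^bsub>M\<^esub>"
      have "\<forall>y\<in>spn R M (insert s S). (a \<otimes>\<^bsub>R\<^esub> t) \<odot>\<^bsub>M\<^esub> y = \<zero>\<^bsub>M\<^esub>"
      proof
        fix y assume "y \<in> spn R M (insert s S)"
        then obtain r m where rm: "r \<in> carrier R" "m \<in> spn R M S" "y = r \<odot>\<^bsub>M\<^esub> s \<oplus>\<^bsub>M\<^esub> m"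
          unfolding T by blast
        have mc: "m \<in> carrier M" using rm sub by auto
        have "(a \<otimes>\<^bsub>R\<^esub> t) \<odot>\<^bsub>M\<^esub> (r \<odot>\<^bsub>M\<^esub> s) = a \<odot>\<^bsub>M\<^esub> (r \<odot>\<^bsub>M\<^esub> (t \<odot>\<^bsub>M\<^esub> s))"
          using a t rm s by (simp add: M.smult_assoc1[symmetric] R.m_comm R.m_lcomm R.m_assoc)
        also have "\<dots> = \<zero>\<^bsub>M\<^esub>" using ka rm t by auto
        finally have 1: "(a \<otimes>\<^bsub>R\<^esub> t) \<odot>\<^bsub>M\<^esub> (r \<odot>\<^bsub>M\<^esub> s) = \<zero>\<^bsub>M\<^esub>" .
        have 2: "(a \<otimes>\<^bsub>R\<^esub> t) \<odot>\<^bsub>M\<^esub> m = \<zero>\<^bsub>M\<^esub>"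
          using a t mc ka rm by (simp add: R.m_comm[of a t] M.smult_assoc1)
        show "(a \<otimes>\<^bsub>R\<^esub> t) \<odot>\<^bsub>M\<^esub> y = \<zero>\<^bsub>M\<^esub>"
          using 1 2 rm mc a t s by (simp add: M.smult_r_distr)
      qed
      then have "(a \<otimes>\<^bsub>R\<^esub> t) \<odot>\<^bsub>N\<^esub> x = \<zero>\<^bsub>N\<^esub>" using insert(5) a t by blast
      then show "a \<odot>\<^bsub>N\<^esub> x = \<zero>\<^bsub>N\<^esub>" using prime[OF a t(1)] t by blast
    qed
    then obtain h' where h': "\<forall>m\<in>spn R M S. h' m \<in> Cx" "lin_on R M N (spn R M S) h'"
      "\<exists>m\<in>spn R M S. h' m \<noteq> \<zero>\<^bsub>N\<^esub>" using insert(3)[OF Ssub] by blast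
    then obtain m0 where m0: "m0 \<in> spn R M S" "h' m0 \<noteq> \<zero>\<^bsub>N\<^esub>" by blast
    show ?thesis by (rule case2[OF insert(1) Ssub s t h'(1,2) m0 T])
  qed
qed

end

lemma pow_mod_simps:
  "carrier (pow_mod V n) = {f. (\<forall>i<n. f i \<in> carrier V) \<and> (\<forall>i\<ge>n. f i = \<zero>\<^bsub>V\<^esub>)}"
  "smult (pow_mod V n) a f = (\<lambda>i. if i < n then a \<odot>\<^bsub>V\<^esub> f i else \<zero>\<^bsub>V\<^esub>)"
  by (simp_all add: pow_mod_def module.defs)

lemma sub_mod_simps:
  "carrier (sub_mod M A) = A" "smult (sub_mod M A) = smult M"
  by (simp_all add: sub_mod_def)

lemma subq_ann:
  assumes U: "module R U" and V: "module R V" and sq: "subq R U V"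
    and a: "a \<in> carrier R" and ka: "\<forall>v\<in>carrier V. a \<odot>\<^bsub>V\<^esub> v = \<zero>\<^bsub>V\<^esub>"
  shows "\<forall>u\<in>carrier U. a \<odot>\<^bsub>U\<^esub> u = \<zero>\<^bsub>U\<^esub>"
proof
  fix u assume u: "u \<in> carrier U"
  obtain n A h where A: "submodule A R (pow_mod V n)" and h: "h \<in> mod_hom R (sub_mod (pow_mod V n) A) U"
    and im: "h ` A = carrier U" using sq unfolding subq_def by blast
  obtain f where f: "f \<in> A" "u = h f" using im u by auto
  have "A \<subseteq> carrier (pow_mod V n)"
    using subgroup.subset[OF submodule.axioms(1)[OF A]] by simp
  then have fc: "\<forall>i<n. f i \<in> carrier V" using f by (auto simp: pow_mod_simps)
  have eq: "smult (pow_mod V n) a f = smult (pow_mod V n) \<zero>\<^bsub>R\<^esub> f"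
    using fc ka module.smult_l_null[OF V] by (auto simp: pow_mod_simps)
  have hs: "h (smult (pow_mod V n) b f) = b \<odot>\<^bsub>U\<^esub> h f" if "b \<in> carrier R" for b
    using h f that unfolding mod_hom_def by (auto simp: sub_mod_simps)
  have "a \<odot>\<^bsub>U\<^esub> h f = \<zero>\<^bsub>R\<^esub> \<odot>\<^bsub>U\<^esub> h f"
    using hs[OF a] hs[of "\<zero>\<^bsub>R\<^esub>"] eq module.axioms(1)[OF U] cring.cring_simprules(2) by metis
  also have "\<dots> = \<zero>\<^bsub>U\<^esub>" using module.smult_l_null[OF U] u f by simp
  finally show "a \<odot>\<^bsub>U\<^esub> u = \<zero>\<^bsub>U\<^esub>" using f by simp
qed




definition ann :: "('a, 'c) ring_scheme \<Rightarrow> ('a, 'b, 'd) module_scheme \<Rightarrow> 'b \<Rightarrow> 'a set" where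
  "ann R N y = {a \<in> carrier R. a \<odot>\<^bsub>N\<^esub> y = \<zero>\<^bsub>N\<^esub>}"

lemma (in module) ann_ideal:
  assumes y: "y \<in> carrier M"
  shows "ideal (ann R M y) R"
proof (rule idealI)
  show "ring R" by (rule R.ring_axioms)
  show "subgroup (ann R M y) (add_monoid R)"
  proof
    show "ann R M y \<subseteq> carrier (add_monoid R)" unfolding ann_def by auto
    fix a b assume "a \<in> ann R M y" "b \<in> ann R M y"
    then show "a \<otimes>\<^bsub>add_monoid R\<^esub> b \<in> ann R M y"
      using y unfolding ann_def by (simp add: smult_l_distr)
  next
    show "\<one>\<^bsub>add_monoid R\<^esub> \<in> ann R M y" using y unfolding ann_def by simp
  next
    fix a assume "a \<in> ann R M y"
    then show "inv\<^bsub>add_monoid R\<^esub> a \<in> ann R M y"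
      using y unfolding ann_def by (simp add: a_inv_def[symmetric] smult_l_minus)
  qed
next
  fix a x assume "a \<in> ann R M y" "x \<in> carrier R"
  then show "x \<otimes> a \<in> ann R M y" "a \<otimes> x \<in> ann R M y"
    using y unfolding ann_def by (simp_all add: smult_assoc1 R.m_comm[of a x])
qed

lemma exists_prime_elem:
  assumes R: "noetherian_ring R" and N: "module R N" and y: "y \<in> carrier N" "y \<noteq> \<zero>\<^bsub>N\<^esub>"
  shows "\<exists>x\<in>carrier N. x \<noteq> \<zero>\<^bsub>N\<^esub> \<and> (\<forall>a b. a \<in> carrier R \<longrightarrow> b \<in> carrier R \<longrightarrow>
     (a \<otimes>\<^bsub>R\<^esub> b) \<odot>\<^bsub>N\<^esub> x = \<zero>\<^bsub>N\<^esub> \<longrightarrow> a \<odot>\<^bsub>N\<^esub> x = \<zero>\<^bsub>N\<^esub> \<or> b \<odot>\<^bsub>N\<^esub> x = \<zero>\<^bsub>N\<^esub>)"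
proof -
  interpret N: module R N by (rule N)
  interpret R: noetherian_ring R by (rule R)
  interpret RC: cring R using N by (simp add: module_def)
  define AA where "AA = {ann R N z | z. z \<in> carrier N \<and> z \<noteq> \<zero>\<^bsub>N\<^esub>}"
  have "\<exists>J\<in>AA. \<forall>Y\<in>AA. J \<subseteq> Y \<longrightarrow> Y = J"
  proof (rule subset_Zorn_nonempty)
    show "AA \<noteq> {}" using y unfolding AA_def by blast
    fix C assume C: "C \<noteq> {}" "subset.chain AA C"
    have "subset.chain {I. ideal I R} C"
      using C(2) N.ann_ideal unfolding subset_chain_def AA_def by blast
    then have "\<Union>C \<in> C" using R.ideal_chain_is_trivial C(1) by blast
    then show "\<Union>C \<in> AA" using C(2) unfolding subset_chain_def by blast
  qed
  then obtain J where J: "J \<in> AA" and mJ: "\<forall>Y\<in>AA. J \<subseteq> Y \<longrightarrow> Y = J" by blast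
  from J obtain x where x: "x \<in> carrier N" "x \<noteq> \<zero>\<^bsub>N\<^esub>" and Jx: "J = ann R N x"
    unfolding AA_def by blast
  have mx: "\<forall>Y\<in>AA. ann R N x \<subseteq> Y \<longrightarrow> Y = ann R N x" using mJ Jx by simp
  show ?thesis
  proof (intro bexI conjI allI impI x)
    fix a b assume a: "a \<in> carrier R" and b: "b \<in> carrier R" and ab: "(a \<otimes>\<^bsub>R\<^esub> b) \<odot>\<^bsub>N\<^esub> x = \<zero>\<^bsub>N\<^esub>"
    show "a \<odot>\<^bsub>N\<^esub> x = \<zero>\<^bsub>N\<^esub> \<or> b \<odot>\<^bsub>N\<^esub> x = \<zero>\<^bsub>N\<^esub>"
    proof (cases "a \<odot>\<^bsub>N\<^esub> x = \<zero>\<^bsub>N\<^esub>")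
      case True then show ?thesis by simp
    next
      case False
      note na = False
      let ?z = "a \<odot>\<^bsub>N\<^esub> x"
      have zc: "?z \<in> carrier N" using a x by simp
      have sub: "ann R N x \<subseteq> ann R N ?z"
      proof
        fix c assume "c \<in> ann R N x"
        then have c: "c \<in> carrier R" "c \<odot>\<^bsub>N\<^esub> x = \<zero>\<^bsub>N\<^esub>" unfolding ann_def by auto
        have "c \<odot>\<^bsub>N\<^esub> ?z = (c \<otimes>\<^bsub>R\<^esub> a) \<odot>\<^bsub>N\<^esub> x" using a c x by (simp add: N.smult_assoc1)
        also have "\<dots> = a \<odot>\<^bsub>N\<^esub> (c \<odot>\<^bsub>N\<^esub> x)" using a c(1) x N.m_comm[of c a] N.smult_assoc1[of a c x] by metis
        also have "\<dots> = \<zero>\<^bsub>N\<^esub>" using c a by simp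
        finally show "c \<in> ann R N ?z" using c unfolding ann_def by simp
      qed
      have "ann R N ?z \<in> AA" using zc na unfolding AA_def by blast
      then have eq: "ann R N ?z = ann R N x" using mx sub by blast
      have "b \<in> ann R N ?z" using a b x ab unfolding ann_def
        by (simp add: N.smult_assoc1[symmetric] N.m_comm[of b a])
      then show ?thesis using eq unfolding ann_def by blast
    qed
  qed (use x in simp_all)
qed


theorem proposition4p1:
  fixes R :: "'a ring"
    and M :: "('a, 'm) module"
    and N :: "('a, 'n) module"
    and P :: "('a, 'p) module"
  assumes "cring R" and "noetherian_ring R"
    and "module R N" and "spectral R N"
    and "module R M" and "fin_gen R M"
    and "module R P" and "spectral R P" and "subq R P M" and "approx R P N"
  shows "\<exists>h\<in>mod_hom R M N. \<exists>x\<in>carrier M. h x \<noteq> \<zero>\<^bsub>N\<^esub>"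
proof -
  interpret MM: module R M by (rule assms(5))
  interpret NN: module R N by (rule assms(3))
  have "carrier N \<noteq> {\<zero>\<^bsub>N\<^esub>}" using assms(4) unfolding spectral_def by blast
  then obtain y where y: "y \<in> carrier N" "y \<noteq> \<zero>\<^bsub>N\<^esub>" using NN.zero_closed by blast
  obtain x where x: "x \<in> carrier N" "x \<noteq> \<zero>\<^bsub>N\<^esub>" and pr: "\<forall>a b. a \<in> carrier R \<longrightarrow> b \<in> carrier R \<longrightarrow>
     (a \<otimes>\<^bsub>R\<^esub> b) \<odot>\<^bsub>N\<^esub> x = \<zero>\<^bsub>N\<^esub> \<longrightarrow> a \<odot>\<^bsub>N\<^esub> x = \<zero>\<^bsub>N\<^esub> \<or> b \<odot>\<^bsub>N\<^esub> x = \<zero>\<^bsub>N\<^esub>"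
    using exists_prime_elem[OF assms(2,3) y] by blast
  interpret S2: setup2 R M N x
    by (intro setup2.intro setup2_axioms.intro assms(1,3,5) x) (use pr in blast)
  obtain S where S: "finite S" "S \<subseteq> carrier M" and gen: "\<forall>m\<in>carrier M. \<exists>c. c \<in> S \<rightarrow> carrier R \<and>
        m = finsum M (\<lambda>s. c s \<odot>\<^bsub>M\<^esub> s) S" using assms(6) unfolding fin_gen_def by blast
  have CM: "carrier M = spn R M S"
  proof
    show "carrier M \<subseteq> spn R M S" using gen unfolding spn_def by blast
    show "spn R M S \<subseteq> carrier M" by (rule MM.spn_sub[OF S])
  qed
  have hyp: "\<forall>a\<in>carrier R. (\<forall>m\<in>spn R M S. a \<odot>\<^bsub>M\<^esub> m = \<zero>\<^bsub>M\<^esub>) \<longrightarrow> a \<odot>\<^bsub>N\<^esub> x = \<zero>\<^bsub>N\<^esub>"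
  proof (intro ballI impI)
    fix a assume a: "a \<in> carrier R" and ka: "\<forall>m\<in>spn R M S. a \<odot>\<^bsub>M\<^esub> m = \<zero>\<^bsub>M\<^esub>"
    have "\<forall>u\<in>carrier P. a \<odot>\<^bsub>P\<^esub> u = \<zero>\<^bsub>P\<^esub>"
      by (rule subq_ann[OF assms(7,5,9) a]) (use ka CM in simp)
    moreover have "subq R N P" using assms(10) unfolding approx_def by blast
    ultimately have "\<forall>u\<in>carrier N. a \<odot>\<^bsub>N\<^esub> u = \<zero>\<^bsub>N\<^esub>"
      using subq_ann[OF assms(3,7) _ a] by blast
    then show "a \<odot>\<^bsub>N\<^esub> x = \<zero>\<^bsub>N\<^esub>" using x by blast
  qed
  obtain h where h: "\<forall>m\<in>spn R M S. h m \<in> S2.Cx" "lin_on R M N (spn R M S) h"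
    "\<exists>m\<in>spn R M S. h m \<noteq> \<zero>\<^bsub>N\<^esub>" using S2.main_L[OF S hyp] by blast
  have "h \<in> mod_hom R M N"
    unfolding mod_hom_def using h(1,2) S2.Cx_sub unfolding lin_on_def CM[symmetric] by blast
  then show ?thesis using h(3) unfolding CM[symmetric] by blast
qed

end
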